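(* Let $K$ be a field, $Q$ the bipartite type $A$ quiver with vertices $y_0,x_1,\dots,x_n,y_n$ and arrows $\alpha_i\colon x_i\to y_{i-1}$, $\beta_i\colon x_i\to y_i$, and $\mathbf{d}$ a dimension vector. For every $V\in\mathrm{rep}_Q(\mathbf{d})$ and all $1\le i,j\le 2n+1$, the rank of $\zeta(V)_{i\times j}$ depends only on the $\mathbf{GL}(\mathbf{d})$-orbit of $V$.
   Context: $\mathrm{rep}_Q(\mathbf{d})$ is the space of tuples $V=(V_a)$ with $V_a\in\mathrm{Mat}_{\mathbf{d}(ha)\times\mathbf{d}(ta)}(K)$, with $\mathbf{GL}(\mathbf{d})=\prod_v\mathbf{GL}_{\mathbf{d}(v)}(K)$ acting by $g\cdot V=(g_{ha}V_ag_{ta}^{-1})$. $M_Q(V)$ is the block matrix with block rows $y_0,\dots,y_n$ (top to bottom) and block columns $x_n,\dots,x_1$ (left to right), with $V_{\alpha_i}$ in block $(y_{i-1},x_i)$, $V_{\beta_i}$ in block $(y_i,x_i)$, zero elsewhere. With $d_x=\sum\mathbf{d}(x_i)$, $d_y=\sum\mathbf{d}(y_i)$, $\zeta(V)=\begin{pmatrix}M_Q(V)&\mathbf{1}_{d_y}\\ \mathbf{1}_{d_x}&0\end{pmatrix}$. Rows of $\zeta(V)$ are split into $2n+1$ blocks of sizes $\mathbf{d}(y_0),\dots,\mathbf{d}(y_n),\mathbf{d}(x_n),\dots,\mathbf{d}(x_1)$, columns into $2n+1$ blocks of sizes $\mathbf{d}(x_n),\dots,\mathbf{d}(x_1),\mathbf{d}(y_0),\dots,\mathbf{d}(y_n)$,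 numbered $1,\dots,2n+1$; $Z_{i\times j}$ is the submatrix of block rows $1,\dots,i$ and block columns $1,\dots,j$. *)

theory Defs
  imports "Jordan_Normal_Form.DL_Rank"
begin

text \<open>A dimension vector is given by dy (values at y_0..y_n) and dx (values at x_1..x_n).
 A representation is given by Va i (= V_{alpha_i}) and Vb i (= V_{beta_i}), i = 1..n.\<close>

definition rep_Q :: "nat \<Rightarrow> (nat \<Rightarrow> nat) \<Rightarrow> (nat \<Rightarrow> nat)
    \<Rightarrow> (nat \<Rightarrow> 'a::field mat) \<Rightarrow> (nat \<Rightarrow> 'a mat) \<Rightarrow> bool" where
  "rep_Q n dy dx Va Vb \<longleftrightarrow>
     (\<forall>i\<in>{1..n}. Va i \<in> carrier_mat (dy (i - 1)) (dx i) \<and> Vb i \<in> carrier_mat (dy i) (dx i))"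

text \<open>An element g of GL(d): invertible matrices gy k (k = 0..n) and gx k (k = 1..n);
 we carry their inverses hy, hx explicitly.\<close>

definition GL_elem :: "nat \<Rightarrow> (nat \<Rightarrow> nat) \<Rightarrow> (nat \<Rightarrow> nat)
    \<Rightarrow> (nat \<Rightarrow> 'a::field mat) \<Rightarrow> (nat \<Rightarrow> 'a mat) \<Rightarrow> (nat \<Rightarrow> 'a mat) \<Rightarrow> (nat \<Rightarrow> 'a mat) \<Rightarrow> bool" where
  "GL_elem n dy dx gy hy gx hx \<longleftrightarrow>
     (\<forall>k\<in>{0..n}. gy k \<in> carrier_mat (dy k) (dy k) \<and> hy k \<in> carrier_mat (dy k) (dy k)
        \<and> gy k * hy k = 1\<^sub>m (dy k) \<and> hy k * gy k = 1\<^sub>m (dy k)) \<and>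
     (\<forall>k\<in>{1..n}. gx k \<in> carrier_mat (dx k) (dx k) \<and> hx k \<in> carrier_mat (dx k) (dx k)
        \<and> gx k * hx k = 1\<^sub>m (dx k) \<and> hx k * gx k = 1\<^sub>m (dx k))"

text \<open>The action (g.V)_a = g_{ha} V_a g_{ta}^{-1}.\<close>
definition act_alpha :: "(nat \<Rightarrow> 'a::field mat) \<Rightarrow> (nat \<Rightarrow> 'a mat) \<Rightarrow> (nat \<Rightarrow> 'a mat) \<Rightarrow> nat \<Rightarrow> 'a mat" where
  "act_alpha gy hx Va i = gy (i - 1) * Va i * hx i"

definition act_beta :: "(nat \<Rightarrow> 'a::field mat) \<Rightarrow> (nat \<Rightarrow> 'a mat) \<Rightarrow> (nat \<Rightarrow> 'a mat) \<Rightarrow> nat \<Rightarrow> 'a mat" where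
  "act_beta gy hx Vb i = gy i * Vb i * hx i"

text \<open>Block sizes: rows y_0,...,y_n,x_n,...,x_1; columns x_n,...,x_1,y_0,...,y_n.
 Blocks are numbered 0..2n here (1..2n+1 in the paper).\<close>
definition row_sizes :: "nat \<Rightarrow> (nat \<Rightarrow> nat) \<Rightarrow> (nat \<Rightarrow> nat) \<Rightarrow> nat list" where
  "row_sizes n dy dx = map dy [0..<Suc n] @ map (\<lambda>k. dx (n - k)) [0..<n]"

definition col_sizes :: "nat \<Rightarrow> (nat \<Rightarrow> nat) \<Rightarrow> (nat \<Rightarrow> nat) \<Rightarrow> nat list" where
  "col_sizes n dy dx = map (\<lambda>k. dx (n - k)) [0..<n] @ map dy [0..<Suc n]"

definition blk_off :: "nat list \<Rightarrow> nat \<Rightarrow> nat" where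
  "blk_off l p = sum_list (take p l)"

definition blk_idx :: "nat list \<Rightarrow> nat \<Rightarrow> nat" where
  "blk_idx l r = (LEAST p. r < sum_list (take (Suc p) l))"

definition block_mat :: "nat list \<Rightarrow> nat list \<Rightarrow> (nat \<Rightarrow> nat \<Rightarrow> 'a::zero mat) \<Rightarrow> 'a mat" where
  "block_mat rs cs B = mat (sum_list rs) (sum_list cs)
     (\<lambda>(r, c). let p = blk_idx rs r; q = blk_idx cs c
              in B p q $$ (r - blk_off rs p, c - blk_off cs q))"

text \<open>Blocks of zeta(V): row block p, column block q (0-based).
 Row block p \<le> n is y_p; row block p > n is x_(2n+1-p).
 Column block q < n is x_(n-q); column block q \<ge> n is y_(q-n).\<close>
definition zeta_block :: "nat \<Rightarrow> (nat \<Rightarrow> nat) \<Rightarrow> (nat \<Rightarrow> nat)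
    \<Rightarrow> (nat \<Rightarrow> 'a::field mat) \<Rightarrow> (nat \<Rightarrow> 'a mat) \<Rightarrow> nat \<Rightarrow> nat \<Rightarrow> 'a mat" where
  "zeta_block n dy dx Va Vb p q =
     (if p \<le> n then
        (if q < n then
           (let k = n - q in
              if p + 1 = k then Va k else if p = k then Vb k else 0\<^sub>m (dy p) (dx k))
         else (if q - n = p then 1\<^sub>m (dy p) else 0\<^sub>m (dy p) (dy (q - n))))
      else
        (if q < n then
           (if 2 * n + 1 - p = n - q then 1\<^sub>m (dx (n - q)) else 0\<^sub>m (dx (2 * n + 1 - p)) (dx (n - q)))
         else 0\<^sub>m (dx (2 * n + 1 - p)) (dy (q - n))))"

definition zeta :: "nat \<Rightarrow> (nat \<Rightarrow> nat) \<Rightarrow> (nat \<Rightarrow> nat)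
    \<Rightarrow> (nat \<Rightarrow> 'a::field mat) \<Rightarrow> (nat \<Rightarrow> 'a mat) \<Rightarrow> 'a mat" where
  "zeta n dy dx Va Vb = block_mat (row_sizes n dy dx) (col_sizes n dy dx) (zeta_block n dy dx Va Vb)"

definition Zsub :: "nat \<Rightarrow> (nat \<Rightarrow> nat) \<Rightarrow> (nat \<Rightarrow> nat)
    \<Rightarrow> (nat \<Rightarrow> 'a::field mat) \<Rightarrow> (nat \<Rightarrow> 'a mat) \<Rightarrow> nat \<Rightarrow> nat \<Rightarrow> 'a mat" where
  "Zsub n dy dx Va Vb i j =
     mat (sum_list (take i (row_sizes n dy dx))) (sum_list (take j (col_sizes n dy dx)))
         (\<lambda>(r, c). zeta n dy dx Va Vb $$ (r, c))"

definition mat_rank :: "'a::field mat \<Rightarrow> nat" where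
  "mat_rank A = vec_space.rank (dim_row A) A"

end

theory Submission
  imports Defs
begin

context vec_space begin

lemma col_space_mult_right:
  assumes A: "A \<in> carrier_mat n m" and E: "E \<in> carrier_mat m m" and F: "F \<in> carrier_mat m m"
    and EF: "E * F = 1\<^sub>m m"
  shows "span (set (cols (A * E))) = span (set (cols A))"
proof -
  have AE: "A * E \<in> carrier_mat n m" using A E by auto
  have "col_space (A * E) = col_space A"
  proof -
    have "y \<in> col_space A" if "y \<in> col_space (A*E)" for y
    proof -
      from that obtain x where x: "x \<in> carrier_vec m" "y = (A*E) *\<^sub>v x" "y \<in> carrier_vec n"
        unfolding col_space_eq[OF AE] using AE by auto
      have "y = A *\<^sub>v (E *\<^sub>v x)" using x A E by (metis assoc_mult_mat_vec)
      then show ?thesis unfolding col_space_eq[OF A] using x A E by auto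
    qed
    moreover have "y \<in> col_space (A*E)" if "y \<in> col_space A" for y
    proof -
      from that obtain x where x: "x \<in> carrier_vec m" "y = A *\<^sub>v x" "y \<in> carrier_vec n"
        unfolding col_space_eq[OF A] using A by auto
      have "A *\<^sub>v x = A *\<^sub>v ((E * F) *\<^sub>v x)" using EF x by simp
      also have "\<dots> = (A * E) *\<^sub>v (F *\<^sub>v x)" using A E F x
        by (metis assoc_mult_mat_vec mult_mat_vec_carrier)
      finally show ?thesis unfolding col_space_eq[OF AE] using x A E F AE by auto
    qed
    ultimately show ?thesis by auto
  qed
  then show ?thesis unfolding col_space_def .
qed

lemma rank_mult_right:
  assumes A: "A \<in> carrier_mat n m" and E: "E \<in> carrier_mat m m" and F: "F \<in> carrier_mat m m"
    and EF: "E * F = 1\<^sub>m m"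
  shows "rank (A * E) = rank A"
  unfolding rank_def using col_space_mult_right[OF assms] by simp

lemma rank_mult_left:
  assumes A: "A \<in> carrier_mat n m" and D: "D \<in> carrier_mat n n" and D': "D' \<in> carrier_mat n n"
    and DD: "D' * D = 1\<^sub>m n"
  shows "rank (D * A) = rank A"
proof -
  have DA: "D * A \<in> carrier_mat n m" using A D by auto
  let ?S = "set (cols A)" and ?S' = "set (cols (D * A))"
  have S: "?S \<subseteq> carrier_vec n" using A cols_dim by blast
  have S': "?S' \<subseteq> carrier_vec n" using DA cols_dim by blast
  have vsA: "vectorspace class_ring (span_vs ?S)"
    using S span_is_subspace subspace_is_vs by simp
  have vsB: "vectorspace class_ring (span_vs ?S')"
    using S' span_is_subspace subspace_is_vs by simp
  have spA: "span ?S = {y\<in>carrier_vec n. \<exists>x\<in>carrier_vec m. A *\<^sub>v x = y}"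
    using col_space_eq[OF A] carrier_matD[OF A] unfolding col_space_def by auto
  have spB: "span ?S' = {y\<in>carrier_vec n. \<exists>x\<in>carrier_vec m. (D * A) *\<^sub>v x = y}"
    using col_space_eq[OF DA] carrier_matD[OF DA] unfolding col_space_def by auto
  have img: "(\<lambda>v. D *\<^sub>v v) ` span ?S = span ?S'"
  proof
    show "(\<lambda>v. D *\<^sub>v v) ` span ?S \<subseteq> span ?S'"
      unfolding spA spB using A D by (auto simp: assoc_mult_mat_vec)
    show "span ?S' \<subseteq> (\<lambda>v. D *\<^sub>v v) ` span ?S"
    proof
      fix y assume "y \<in> span ?S'"
      then obtain x where x: "x \<in> carrier_vec m" "y = (D*A) *\<^sub>v x" unfolding spB by auto
      have "y = D *\<^sub>v (A *\<^sub>v x)" using x A D by (simp add: assoc_mult_mat_vec)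
      moreover have "A *\<^sub>v x \<in> span ?S" unfolding spA using x A by auto
      ultimately show "y \<in> (\<lambda>v. D *\<^sub>v v) ` span ?S" by blast
    qed
  qed
  have inj: "inj_on (\<lambda>v. D *\<^sub>v v) (span ?S)"
  proof
    fix x y assume "x \<in> span ?S" "y \<in> span ?S" "D *\<^sub>v x = D *\<^sub>v y"
    then have x: "x \<in> carrier_vec n" and y: "y \<in> carrier_vec n" and e: "D *\<^sub>v x = D *\<^sub>v y"
      unfolding spA by auto
    have "x = (D' * D) *\<^sub>v x" using DD x by simp
    also have "\<dots> = D' *\<^sub>v (D *\<^sub>v x)" using D D' x by (simp add: assoc_mult_mat_vec)
    also have "\<dots> = D' *\<^sub>v (D *\<^sub>v y)" using e by simp
    also have "\<dots> = (D' * D) *\<^sub>v y" using D D' y by (simp add: assoc_mult_mat_vec)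
    also have "\<dots> = y" using DD y by simp
    finally show "x = y" .
  qed
  have hom: "(\<lambda>v. D *\<^sub>v v) \<in> LinearCombinations.module_hom class_ring (span_vs ?S) (span_vs ?S')"
      unfolding LinearCombinations.module_hom_def using img
      by (auto simp: spA intro!: mult_add_distrib_mat_vec[OF D] mult_mat_vec[OF D])
  have lm: "linear_map class_ring (span_vs ?S) (span_vs ?S') (\<lambda>v. D *\<^sub>v v)"
    unfolding linear_map_def mod_hom_def mod_hom_axioms_def
    using vsA vsB hom by (simp add: vectorspace_def)
  interpret L: linear_map class_ring "span_vs ?S" "span_vs ?S'" "\<lambda>v. D *\<^sub>v v" by (rule lm)
  have fd: "L.V.fin_dim" using fin_dim_span_cols[OF A] unfolding col_space_def by simp
  have "L.V.dim = L.W.dim" using L.dim_eq[OF fd] inj img by simp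
  then show ?thesis unfolding rank_def by simp
qed

end

lemma sum_take_mono: "a \<le> b \<Longrightarrow> sum_list (take a (l::nat list)) \<le> sum_list (take b l)"
proof -
  assume "a \<le> b"
  then have "take b l = take a l @ take (b - a) (drop a l)"
    by (metis le_add_diff_inverse take_add)
  then show ?thesis by simp
qed

lemma off_Suc: "p < length l \<Longrightarrow> sum_list (take (Suc p) l) = blk_off l p + (l ! p :: nat)"
  unfolding blk_off_def by (simp add: take_Suc_conv_app_nth)

lemma blk_off_le: "p < length l \<Longrightarrow> blk_off l p + (l ! p :: nat) \<le> sum_list l"
  using off_Suc[of p l] sum_take_mono[of "Suc p" "length l" l] by simp

lemma blk_idx_eq:
  assumes p: "p < length l" and t: "t < (l ! p :: nat)"
  shows "blk_idx l (blk_off l p + t) = p"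
  unfolding blk_idx_def
proof (rule Least_equality)
  show "blk_off l p + t < sum_list (take (Suc p) l)" using off_Suc[OF p] t by simp
  fix y assume y: "blk_off l p + t < sum_list (take (Suc y) l)"
  show "p \<le> y"
  proof (rule ccontr)
    assume "\<not> p \<le> y"
    then have "Suc y \<le> p" by simp
    then have "sum_list (take (Suc y) l) \<le> blk_off l p"
      unfolding blk_off_def by (rule sum_take_mono)
    then show False using y by simp
  qed
qed

lemma blk_idx_bounds:
  assumes r: "r < sum_list (l :: nat list)"
  shows "blk_idx l r < length l" "blk_off l (blk_idx l r) \<le> r"
    "r < blk_off l (blk_idx l r) + l ! blk_idx l r"
proof -
  have ne: "l \<noteq> []" using r by auto
  have ex: "r < sum_list (take (Suc (length l - 1)) l)" using ne r by simp
  let ?p = "blk_idx l r"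
  have lt: "r < sum_list (take (Suc ?p) l)" unfolding blk_idx_def by (rule LeastI[of "\<lambda>p. r < sum_list (take (Suc p) l)", OF ex])
  have "?p \<le> length l - 1" unfolding blk_idx_def by (rule Least_le[of "\<lambda>p. r < sum_list (take (Suc p) l)", OF ex])
  then show p: "?p < length l" using ne by (cases l) auto
  show "r < blk_off l ?p + l ! ?p" using lt off_Suc[OF p] by simp
  show "blk_off l ?p \<le> r"
  proof (cases ?p)
    case 0 then show ?thesis by (simp add: blk_off_def)
  next
    case (Suc p')
    have "\<not> r < sum_list (take (Suc p') l)"
      unfolding blk_idx_def by (rule not_less_Least) (use Suc in \<open>simp add: blk_idx_def\<close>)
    then show ?thesis using Suc by (simp add: blk_off_def)
  qed
qed

lemma blk_idx_take:
  assumes r: "r < sum_list (take i (l :: nat list))"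
  shows "blk_idx (take i l) r = blk_idx l r"
    "blk_off (take i l) (blk_idx (take i l) r) = blk_off l (blk_idx l r)"
proof -
  let ?p = "blk_idx (take i l) r"
  note b = blk_idx_bounds[OF r]
  have pi: "?p < i" "?p < length l" using b(1) by auto
  have off: "blk_off (take i l) ?p = blk_off l ?p"
    unfolding blk_off_def using pi by (simp add: min_def)
  have nth: "take i l ! ?p = l ! ?p" using pi by simp
  have "blk_idx l (blk_off l ?p + (r - blk_off l ?p)) = ?p"
    by (rule blk_idx_eq) (use pi b off nth in auto)
  then have e: "blk_idx l r = ?p" using b off by simp
  then show "blk_idx (take i l) r = blk_idx l r" by simp
  show "blk_off (take i l) ?p = blk_off l (blk_idx l r)" using e off by simp
qed

lemma blk_off_take_idx:
  assumes r: "r < sum_list (take i (l :: nat list))"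
  shows "blk_off (take i l) (blk_idx l r) = blk_off l (blk_idx l r)"
  using blk_idx_take[OF r] by simp

lemma block_mat_dims[simp]:
  "dim_row (block_mat rs cs B) = sum_list rs" "dim_col (block_mat rs cs B) = sum_list cs"
  "block_mat rs cs B \<in> carrier_mat (sum_list rs) (sum_list cs)"
  by (auto simp: block_mat_def)

lemma block_mat_index:
  "r < sum_list rs \<Longrightarrow> c < sum_list cs \<Longrightarrow> block_mat rs cs B $$ (r, c) =
     B (blk_idx rs r) (blk_idx cs c) $$ (r - blk_off rs (blk_idx rs r), c - blk_off cs (blk_idx cs c))"
  by (simp add: block_mat_def Let_def)

lemma block_mat_index_off:
  assumes "p < length rs" "t < rs ! p" "q < length cs" "u < cs ! q"
  shows "block_mat rs cs B $$ (blk_off rs p + t, blk_off cs q + u) = B p q $$ (t, u)"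
proof -
  have "blk_off rs p + t < sum_list rs" using blk_off_le[OF assms(1)] assms(2) by simp
  moreover have "blk_off cs q + u < sum_list cs" using blk_off_le[OF assms(3)] assms(4) by simp
  ultimately show ?thesis by (simp add: block_mat_index blk_idx_eq assms)
qed

lemma block_mat_cong:
  assumes "\<And>p q. p < length rs \<Longrightarrow> q < length cs \<Longrightarrow> B p q = B' p q"
  shows "block_mat rs cs B = block_mat rs cs B'"
  by (rule eq_matI) (auto simp: block_mat_index assms blk_idx_bounds)

definition bdiag :: "nat list \<Rightarrow> (nat \<Rightarrow> 'a::zero mat) \<Rightarrow> 'a mat" where
  "bdiag l P = block_mat l l (\<lambda>p q. if p = q then P p else 0\<^sub>m (l ! p) (l ! q))"

lemma bdiag_index:
  assumes r: "r < sum_list l" and k: "k < sum_list l"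
  shows "bdiag l P $$ (r, k) = (if blk_idx l k = blk_idx l r
      then P (blk_idx l r) $$ (r - blk_off l (blk_idx l r), k - blk_off l (blk_idx l r)) else 0)"
  using blk_idx_bounds[OF r] blk_idx_bounds[OF k]
  by (auto simp: bdiag_def block_mat_index[OF r k])

lemma bdiag_dims[simp]: "dim_row (bdiag l P) = sum_list l" "dim_col (bdiag l P) = sum_list l"
  by (simp_all add: bdiag_def)

lemma bdiag_carrier[simp]: "bdiag l P \<in> carrier_mat (sum_list l) (sum_list l)"
  by (simp add: bdiag_def)


lemma mult_entry:
  assumes "i < dim_row A" "j < dim_col B" "dim_col A = dim_row B"
  shows "(A * B) $$ (i, j) = (\<Sum>k\<in>{0..<dim_row B}. A $$ (i, k) * B $$ (k, j))"
  using assms by (auto simp: scalar_prod_def intro!: sum.cong)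

lemma sum_interval:
  fixes f :: "nat \<Rightarrow> 'a::comm_monoid_add"
  assumes "ofs + s \<le> N" "\<And>k. k < N \<Longrightarrow> k < ofs \<or> ofs + s \<le> k \<Longrightarrow> f k = 0"
  shows "sum f {0..<N} = (\<Sum>t\<in>{0..<s}. f (ofs + t))"
proof -
  have "sum f {0..<N} = sum f {ofs..<ofs+s}"
    by (rule sum.mono_neutral_right) (use assms in auto)
  also have "\<dots> = (\<Sum>t\<in>{0..<s}. f (ofs + t))"
    using sum.shift_bounds_nat_ivl[of f 0 ofs s] by (simp add: add.commute)
  finally show ?thesis .
qed

lemma bdiag_mult_left:
  assumes P: "\<And>p. p < length rs \<Longrightarrow> P p \<in> carrier_mat (rs ! p) (rs ! p)"
    and B: "\<And>p q. p < length rs \<Longrightarrow> q < length cs \<Longrightarrow> B p q \<in> carrier_mat (rs ! p) (cs ! q)"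
  shows "bdiag rs P * block_mat rs cs B = block_mat rs cs (\<lambda>p q. P p * B p q)"
proof (rule eq_matI)
  fix r c assume "r < dim_row (block_mat rs cs (\<lambda>p q. P p * B p q))"
    "c < dim_col (block_mat rs cs (\<lambda>p q. P p * B p q))"
  then have r: "r < sum_list rs" and c: "c < sum_list cs" by auto
  define p where "p = blk_idx rs r"
  define ofs where "ofs = blk_off rs p"
  define q where "q = blk_idx cs c"
  define oq where "oq = blk_off cs q"
  note br = blk_idx_bounds[OF r, folded p_def, folded ofs_def]
  note bc = blk_idx_bounds[OF c, folded q_def, folded oq_def]
  have Pp: "P p \<in> carrier_mat (rs ! p) (rs ! p)" using P br by auto
  have Bpq: "B p q \<in> carrier_mat (rs ! p) (cs ! q)" using B br bc by auto
  have "(bdiag rs P * block_mat rs cs B) $$ (r, c) =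
     (\<Sum>k\<in>{0..<sum_list rs}. bdiag rs P $$ (r, k) * block_mat rs cs B $$ (k, c))"
    using mult_entry[of r "bdiag rs P" c "block_mat rs cs B"] r c by simp
  also have "\<dots> = (\<Sum>t\<in>{0..<rs ! p}. bdiag rs P $$ (r, ofs + t) * block_mat rs cs B $$ (ofs + t, c))"
  proof (rule sum_interval)
    show "ofs + rs ! p \<le> sum_list rs" unfolding ofs_def using blk_off_le br(1) by blast
    fix k assume k: "k < sum_list rs" "k < ofs \<or> ofs + rs ! p \<le> k"
    have "blk_idx rs k \<noteq> p" using blk_idx_bounds[OF k(1)] k(2) unfolding ofs_def by auto
    then show "bdiag rs P $$ (r, k) * block_mat rs cs B $$ (k, c) = 0"
      using bdiag_index[OF r k(1), where P=P] p_def by simp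
  qed
  also have "\<dots> = (\<Sum>t\<in>{0..<rs ! p}. P p $$ (r - ofs, t) * B p q $$ (t, c - oq))"
  proof (rule sum.cong)
    fix t assume t: "t \<in> {0..<rs ! p}"
    have ot: "ofs + t < sum_list rs" using blk_off_le[OF br(1)] t unfolding ofs_def by auto
    have i1: "blk_idx rs (ofs + t) = p" using blk_idx_eq[OF br(1)] t unfolding ofs_def by auto
    have "bdiag rs P $$ (r, ofs + t) = P p $$ (r - ofs, t)"
      using bdiag_index[OF r ot] i1 unfolding p_def ofs_def by simp
    moreover have "block_mat rs cs B $$ (ofs + t, c) = B p q $$ (t, c - oq)"
      using block_mat_index_off[where rs=rs and p=p and t=t and cs=cs and q=q and u="c - oq" and B=B] t br bc unfolding ofs_def oq_def q_def
      by auto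
    ultimately show "bdiag rs P $$ (r, ofs + t) * block_mat rs cs B $$ (ofs + t, c) =
        P p $$ (r - ofs, t) * B p q $$ (t, c - oq)" by simp
  qed simp
  also have "\<dots> = (P p * B p q) $$ (r - ofs, c - oq)"
    using Pp Bpq br bc by (subst mult_entry) auto
  also have "\<dots> = block_mat rs cs (\<lambda>p q. P p * B p q) $$ (r, c)"
    using block_mat_index[OF r c, where B="\<lambda>p q. P p * B p q"] p_def ofs_def q_def oq_def by simp
  finally show "(bdiag rs P * block_mat rs cs B) $$ (r, c) = block_mat rs cs (\<lambda>p q. P p * B p q) $$ (r, c)" .
qed (auto simp: bdiag_def)

lemma bdiag_mult_right:
  assumes Q: "\<And>q. q < length cs \<Longrightarrow> Q q \<in> carrier_mat (cs ! q) (cs ! q)"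
    and B: "\<And>p q. p < length rs \<Longrightarrow> q < length cs \<Longrightarrow> B p q \<in> carrier_mat (rs ! p) (cs ! q)"
  shows "block_mat rs cs B * bdiag cs Q = block_mat rs cs (\<lambda>p q. B p q * Q q)"
proof (rule eq_matI)
  fix r c assume "r < dim_row (block_mat rs cs (\<lambda>p q. B p q * Q q))"
    "c < dim_col (block_mat rs cs (\<lambda>p q. B p q * Q q))"
  then have r: "r < sum_list rs" and c: "c < sum_list cs" by auto
  define p where "p = blk_idx rs r"
  define ofs where "ofs = blk_off rs p"
  define q where "q = blk_idx cs c"
  define oq where "oq = blk_off cs q"
  note br = blk_idx_bounds[OF r, folded p_def, folded ofs_def]
  note bc = blk_idx_bounds[OF c, folded q_def, folded oq_def]
  have Qq: "Q q \<in> carrier_mat (cs ! q) (cs ! q)" using Q bc by auto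
  have Bpq: "B p q \<in> carrier_mat (rs ! p) (cs ! q)" using B br bc by auto
  have "(block_mat rs cs B * bdiag cs Q) $$ (r, c) =
     (\<Sum>k\<in>{0..<sum_list cs}. block_mat rs cs B $$ (r, k) * bdiag cs Q $$ (k, c))"
    using mult_entry[of r "block_mat rs cs B" c "bdiag cs Q"] r c by simp
  also have "\<dots> = (\<Sum>t\<in>{0..<cs ! q}. block_mat rs cs B $$ (r, oq + t) * bdiag cs Q $$ (oq + t, c))"
  proof (rule sum_interval)
    show "oq + cs ! q \<le> sum_list cs" unfolding oq_def using blk_off_le bc(1) by blast
    fix k assume k: "k < sum_list cs" "k < oq \<or> oq + cs ! q \<le> k"
    have "blk_idx cs k \<noteq> q" using blk_idx_bounds[OF k(1)] k(2) unfolding oq_def by auto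
    then show "block_mat rs cs B $$ (r, k) * bdiag cs Q $$ (k, c) = 0"
      using bdiag_index[OF k(1) c, where P=Q] q_def by simp
  qed
  also have "\<dots> = (\<Sum>t\<in>{0..<cs ! q}. B p q $$ (r - ofs, t) * Q q $$ (t, c - oq))"
  proof (rule sum.cong)
    fix t assume t: "t \<in> {0..<cs ! q}"
    have ot: "oq + t < sum_list cs" using blk_off_le[OF bc(1)] t unfolding oq_def by auto
    have i1: "blk_idx cs (oq + t) = q" using blk_idx_eq[OF bc(1)] t unfolding oq_def by auto
    have "bdiag cs Q $$ (oq + t, c) = Q q $$ (t, c - oq)"
      using bdiag_index[OF ot c] i1 unfolding q_def oq_def by simp
    moreover have "block_mat rs cs B $$ (r, oq + t) = B p q $$ (r - ofs, t)"
      using block_mat_index_off[where rs=rs and p=p and t="r - ofs" and cs=cs and q=q and u=t and B=B] t br bc unfolding ofs_def oq_def p_def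
      by auto
    ultimately show "block_mat rs cs B $$ (r, oq + t) * bdiag cs Q $$ (oq + t, c) =
        B p q $$ (r - ofs, t) * Q q $$ (t, c - oq)" by simp
  qed simp
  also have "\<dots> = (B p q * Q q) $$ (r - ofs, c - oq)"
    using Qq Bpq br bc by (subst mult_entry) auto
  also have "\<dots> = block_mat rs cs (\<lambda>p q. B p q * Q q) $$ (r, c)"
    using block_mat_index[OF r c, where B="\<lambda>p q. B p q * Q q"] p_def ofs_def q_def oq_def by simp
  finally show "(block_mat rs cs B * bdiag cs Q) $$ (r, c) = block_mat rs cs (\<lambda>p q. B p q * Q q) $$ (r, c)" .
qed (auto simp: bdiag_def)

lemma bdiag_one:
  assumes PQ: "\<And>p. p < length l \<Longrightarrow> P p \<in> carrier_mat (l ! p) (l ! p) \<and> Q p \<in> carrier_mat (l ! p) (l ! p)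
     \<and> P p * Q p = 1\<^sub>m (l ! p)"
  shows "bdiag l P * bdiag l Q = 1\<^sub>m (sum_list l)"
proof -
  have "bdiag l P * bdiag l Q = block_mat l l (\<lambda>p q. P p * (if p = q then Q p else 0\<^sub>m (l ! p) (l ! q)))"
    unfolding bdiag_def[of l Q] by (rule bdiag_mult_left) (use PQ in auto)
  also have "\<dots> = block_mat l l (\<lambda>p q. if p = q then 1\<^sub>m (l ! p) else 0\<^sub>m (l ! p) (l ! q))"
  proof (rule block_mat_cong)
    fix p q assume "p < length l" "q < length l"
    then show "P p * (if p = q then Q p else 0\<^sub>m (l ! p) (l ! q)) = (if p = q then 1\<^sub>m (l ! p) else 0\<^sub>m (l ! p) (l ! q))"
      using PQ[of p] by (auto intro: right_mult_zero_mat)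
  qed
  also have "\<dots> = 1\<^sub>m (sum_list l)"
  proof (rule eq_matI)
    fix r k assume "r < dim_row (1\<^sub>m (sum_list l))" "k < dim_col (1\<^sub>m (sum_list l))"
    then have r: "r < sum_list l" and k: "k < sum_list l" by auto
    note br = blk_idx_bounds[OF r] and bk = blk_idx_bounds[OF k]
    show "block_mat l l (\<lambda>p q. if p = q then 1\<^sub>m (l ! p) else 0\<^sub>m (l ! p) (l ! q)) $$ (r, k) = 1\<^sub>m (sum_list l) $$ (r, k)"
      using br bk r k by (auto simp: block_mat_index[OF r k])
  qed auto
  finally show ?thesis .
qed


lemma sum_take_le: "sum_list (take i (l::nat list)) \<le> sum_list l"
  using sum_take_mono[of i "length l" l] by (cases "i \<le> length l") auto

lemma len_rows[simp]: "length (row_sizes n dy dx) = 2 * n + 1"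
  by (simp add: row_sizes_def)

lemma len_cols[simp]: "length (col_sizes n dy dx) = 2 * n + 1"
  by (simp add: col_sizes_def)

lemma rows_nth: "p < 2 * n + 1 \<Longrightarrow> row_sizes n dy dx ! p = (if p \<le> n then dy p else dx (2 * n + 1 - p))"
  unfolding row_sizes_def
  by (auto simp: nth_append Suc_diff_le mult_2)

lemma cols_nth: "q < 2 * n + 1 \<Longrightarrow> col_sizes n dy dx ! q = (if q < n then dx (n - q) else dy (q - n))"
  unfolding col_sizes_def
  by (auto simp: nth_append intro!: arg_cong[where f=dy])

lemma Zsub_eq: "Zsub n dy dx Va Vb i j =
   block_mat (take i (row_sizes n dy dx)) (take j (col_sizes n dy dx)) (zeta_block n dy dx Va Vb)"
proof (rule eq_matI)
  let ?rs = "row_sizes n dy dx" and ?cs = "col_sizes n dy dx"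
  fix r c assume "r < dim_row (block_mat (take i ?rs) (take j ?cs) (zeta_block n dy dx Va Vb))"
    "c < dim_col (block_mat (take i ?rs) (take j ?cs) (zeta_block n dy dx Va Vb))"
  then have r: "r < sum_list (take i ?rs)" and c: "c < sum_list (take j ?cs)" by auto
  have r': "r < sum_list ?rs" using r sum_take_le[of i ?rs] by linarith
  have c': "c < sum_list ?cs" using c sum_take_le[of j ?cs] by linarith
  show "Zsub n dy dx Va Vb i j $$ (r, c) =
     block_mat (take i ?rs) (take j ?cs) (zeta_block n dy dx Va Vb) $$ (r, c)"
    unfolding Zsub_def zeta_def using r c r' c'
    by (simp add: block_mat_index blk_idx_take blk_off_take_idx)
qed (auto simp: Zsub_def)


lemma zero_sandwich:
  "A \<in> carrier_mat a a \<Longrightarrow> B \<in> carrier_mat b b \<Longrightarrow> A * 0\<^sub>m a b * B = 0\<^sub>m a b"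
  by (simp add: right_mult_zero_mat[of A a a b] left_mult_zero_mat[of B b b a])

lemma one_sandwich:
  fixes A B :: "'a::semiring_1 mat"
  assumes "A \<in> carrier_mat a a" "A * B = 1\<^sub>m a"
  shows "A * 1\<^sub>m a * B = 1\<^sub>m a"
  using right_mult_one_mat[OF assms(1)] assms(2) by simp

definition Dm :: "nat \<Rightarrow> (nat \<Rightarrow> 'a mat) \<Rightarrow> (nat \<Rightarrow> 'a mat) \<Rightarrow> nat \<Rightarrow> 'a mat" where
  "Dm n gy gx p = (if p \<le> n then gy p else gx (2 * n + 1 - p))"

definition Em :: "nat \<Rightarrow> (nat \<Rightarrow> 'a mat) \<Rightarrow> (nat \<Rightarrow> 'a mat) \<Rightarrow> nat \<Rightarrow> 'a mat" where
  "Em n hy hx q = (if q < n then hx (n - q) else hy (q - n))"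

lemma zb_carrier:
  assumes rep: "rep_Q n dy dx Va Vb" and p: "p < 2 * n + 1" and q: "q < 2 * n + 1"
  shows "zeta_block n dy dx Va Vb p q \<in> carrier_mat (row_sizes n dy dx ! p) (col_sizes n dy dx ! q)"
proof -
  have R: "\<And>k. 1 \<le> k \<Longrightarrow> k \<le> n \<Longrightarrow> Va k \<in> carrier_mat (dy (k - 1)) (dx k) \<and> Vb k \<in> carrier_mat (dy k) (dx k)"
    using rep unfolding rep_Q_def by auto
  show ?thesis
  proof (cases "p \<le> n")
    case True
    show ?thesis
    proof (cases "q < n")
      case q': True
      then have k: "1 \<le> n - q" "n - q \<le> n" by auto
      have e: "Suc p = n - q \<Longrightarrow> n - Suc q = p" by arith
      show ?thesis using True q' p q R[OF k] e
        by (auto simp: zeta_block_def rows_nth cols_nth Let_def)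
    next
      case False then show ?thesis using True p q by (auto simp: zeta_block_def rows_nth cols_nth)
    qed
  next
    case False then show ?thesis using p q by (auto simp: zeta_block_def rows_nth cols_nth)
  qed
qed

lemma zb_act:
  assumes rep: "rep_Q n dy dx Va Vb" and gl: "GL_elem n dy dx gy hy gx hx"
    and p: "p < 2 * n + 1" and q: "q < 2 * n + 1"
  shows "zeta_block n dy dx (act_alpha gy hx Va) (act_beta gy hx Vb) p q =
     Dm n gy gx p * zeta_block n dy dx Va Vb p q * Em n hy hx q"
proof -
  have GY: "\<And>k. k \<le> n \<Longrightarrow> gy k \<in> carrier_mat (dy k) (dy k) \<and> hy k \<in> carrier_mat (dy k) (dy k)
        \<and> gy k * hy k = 1\<^sub>m (dy k)"
    using gl unfolding GL_elem_def by auto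
  have GX: "\<And>k. 1 \<le> k \<Longrightarrow> k \<le> n \<Longrightarrow> gx k \<in> carrier_mat (dx k) (dx k) \<and> hx k \<in> carrier_mat (dx k) (dx k)
        \<and> gx k * hx k = 1\<^sub>m (dx k)"
    using gl unfolding GL_elem_def by auto
  show ?thesis
  proof (cases "p \<le> n")
    case True
    note gp = GY[OF True]
    show ?thesis
    proof (cases "q < n")
      case q': True
      define k where "k = n - q"
      have k: "1 \<le> k" "k \<le> n" using q' unfolding k_def by auto
      note gk = GX[OF k]
      have "gy p * 0\<^sub>m (dy p) (dx k) * hx k = 0\<^sub>m (dy p) (dx k)"
        using gp gk by (simp add: zero_sandwich)
      then show ?thesis using True q'
        by (auto simp: zeta_block_def Dm_def Em_def Let_def act_alpha_def act_beta_def k_def[symmetric])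
    next
      case q': False
      have qn: "q - n \<le> n" using q by auto
      note gq = GY[OF qn]
      have "gy p * 0\<^sub>m (dy p) (dy (q - n)) * hy (q - n) = 0\<^sub>m (dy p) (dy (q - n))"
        using gp gq by (simp add: zero_sandwich)
      moreover have "gy p * 1\<^sub>m (dy p) * hy p = 1\<^sub>m (dy p)" using gp by (simp add: one_sandwich)
      ultimately show ?thesis using True q'
        by (auto simp: zeta_block_def Dm_def Em_def)
    qed
  next
    case False
    define m where "m = 2 * n + 1 - p"
    have m: "1 \<le> m" "m \<le> n" using False p unfolding m_def by auto
    note gm = GX[OF m]
    show ?thesis
    proof (cases "q < n")
      case q': True
      define k where "k = n - q"
      have k: "1 \<le> k" "k \<le> n" using q' unfolding k_def by auto
      note gk = GX[OF k]
      have "gx m * 0\<^sub>m (dx m) (dx k) * hx k = 0\<^sub>m (dx m) (dx k)"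
        using gm gk by (simp add: zero_sandwich)
      moreover have "gx k * 1\<^sub>m (dx k) * hx k = 1\<^sub>m (dx k)" using gk by (simp add: one_sandwich)
      ultimately show ?thesis using False q' unfolding m_def k_def
        by (auto simp: zeta_block_def Dm_def Em_def)
    next
      case q': False
      have qn: "q - n \<le> n" using q by auto
      note gq = GY[OF qn]
      have "gx m * 0\<^sub>m (dx m) (dy (q - n)) * hy (q - n) = 0\<^sub>m (dx m) (dy (q - n))"
        using gm gq by (simp add: zero_sandwich)
      then show ?thesis using False q' unfolding m_def
        by (auto simp: zeta_block_def Dm_def Em_def)
    qed
  qed
qed


theorem lemma4p2:
  fixes n :: nat and dy dx :: "nat \<Rightarrow> nat"
    and Va Vb gy hy gx hx :: "nat \<Rightarrow> 'a::field mat"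
    and i j :: nat
  assumes "rep_Q n dy dx Va Vb"
    and "GL_elem n dy dx gy hy gx hx"
    and "1 \<le> i" "i \<le> 2 * n + 1" "1 \<le> j" "j \<le> 2 * n + 1"
  shows "mat_rank (Zsub n dy dx (act_alpha gy hx Va) (act_beta gy hx Vb) i j)
       = mat_rank (Zsub n dy dx Va Vb i j)"
proof -
  note rep = assms(1) and gl = assms(2)
  define rs where "rs = take i (row_sizes n dy dx)"
  define cs where "cs = take j (col_sizes n dy dx)"
  define D where "D = Dm n gy gx"
  define D' where "D' = Dm n hy hx"
  define E where "E = Em n hy hx"
  define E' where "E' = Em n gy gx"
  define zb where "zb = zeta_block n dy dx Va Vb"
  have lrs: "length rs = i" and lcs: "length cs = j" using assms unfolding rs_def cs_def by auto
  have rsn: "p < i \<Longrightarrow> rs ! p = (if p \<le> n then dy p else dx (2 * n + 1 - p))" for p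
    using assms rows_nth[of p n dy dx] unfolding rs_def by auto
  have csn: "q < j \<Longrightarrow> cs ! q = (if q < n then dx (n - q) else dy (q - n))" for q
    using assms cols_nth[of q n dy dx] unfolding cs_def by auto
  have GY: "\<And>k. k \<le> n \<Longrightarrow> gy k \<in> carrier_mat (dy k) (dy k) \<and> hy k \<in> carrier_mat (dy k) (dy k)
        \<and> gy k * hy k = 1\<^sub>m (dy k) \<and> hy k * gy k = 1\<^sub>m (dy k)"
    using gl unfolding GL_elem_def by auto
  have GX: "\<And>k. 1 \<le> k \<Longrightarrow> k \<le> n \<Longrightarrow> gx k \<in> carrier_mat (dx k) (dx k) \<and> hx k \<in> carrier_mat (dx k) (dx k)
        \<and> gx k * hx k = 1\<^sub>m (dx k) \<and> hx k * gx k = 1\<^sub>m (dx k)"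
    using gl unfolding GL_elem_def by auto
  have Dc: "p < length rs \<Longrightarrow> D' p \<in> carrier_mat (rs ! p) (rs ! p) \<and> D p \<in> carrier_mat (rs ! p) (rs ! p)
     \<and> D' p * D p = 1\<^sub>m (rs ! p)" for p
  proof -
    assume p: "p < length rs"
    show ?thesis
    proof (cases "p \<le> n")
      case True then show ?thesis using GY[OF True] p lrs rsn[of p] by (simp add: D_def D'_def Dm_def)
    next
      case False
      have m: "1 \<le> 2 * n + 1 - p" "2 * n + 1 - p \<le> n" using False p lrs assms by auto
      show ?thesis using False GX[OF m] p lrs rsn[of p] by (simp add: D_def D'_def Dm_def)
    qed
  qed
  have Ec: "q < length cs \<Longrightarrow> E q \<in> carrier_mat (cs ! q) (cs ! q) \<and> E' q \<in> carrier_mat (cs ! q) (cs ! q)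
     \<and> E q * E' q = 1\<^sub>m (cs ! q)" for q
  proof -
    assume q: "q < length cs"
    show ?thesis
    proof (cases "q < n")
      case True
      have m: "1 \<le> n - q" "n - q \<le> n" using True by auto
      show ?thesis using True GX[OF m] q lcs csn[of q] by (simp add: E_def E'_def Em_def)
    next
      case False
      have m: "q - n \<le> n" using q lcs assms by auto
      show ?thesis using False GY[OF m] q lcs csn[of q] by (simp add: E_def E'_def Em_def)
    qed
  qed
  have Bc: "p < length rs \<Longrightarrow> q < length cs \<Longrightarrow> zb p q \<in> carrier_mat (rs ! p) (cs ! q)" for p q
    using zb_carrier[OF rep, of p q] lrs lcs assms unfolding zb_def rs_def cs_def by auto
  have "Zsub n dy dx (act_alpha gy hx Va) (act_beta gy hx Vb) i j
      = block_mat rs cs (\<lambda>p q. D p * zb p q * E q)"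
    unfolding Zsub_eq rs_def[symmetric] cs_def[symmetric]
    by (rule block_mat_cong) (use zb_act[OF rep gl] lrs lcs assms in \<open>auto simp: D_def E_def zb_def\<close>)
  also have "\<dots> = block_mat rs cs (\<lambda>p q. D p * zb p q) * bdiag cs E"
  proof (rule bdiag_mult_right[symmetric])
    fix p q assume "p < length rs" "q < length cs"
    then show "D p * zb p q \<in> carrier_mat (rs ! p) (cs ! q)"
      using Dc[of p] Bc[of p q] by (meson mult_carrier_mat)
  qed (use Ec in auto)
  also have "block_mat rs cs (\<lambda>p q. D p * zb p q) = bdiag rs D * block_mat rs cs zb"
    by (rule bdiag_mult_left[symmetric]) (use Dc Bc in auto)
  finally have Z: "Zsub n dy dx (act_alpha gy hx Va) (act_beta gy hx Vb) i j
      = bdiag rs D * block_mat rs cs zb * bdiag cs E" .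
  have Y: "block_mat rs cs zb = Zsub n dy dx Va Vb i j"
    unfolding Zsub_eq rs_def cs_def zb_def ..
  have Yc: "block_mat rs cs zb \<in> carrier_mat (sum_list rs) (sum_list cs)" by simp
  have DY: "bdiag rs D * block_mat rs cs zb \<in> carrier_mat (sum_list rs) (sum_list cs)"
    using mult_carrier_mat[OF bdiag_carrier Yc] .
  have EE: "bdiag cs E * bdiag cs E' = 1\<^sub>m (sum_list cs)"
    by (rule bdiag_one) (use Ec in auto)
  have DD: "bdiag rs D' * bdiag rs D = 1\<^sub>m (sum_list rs)"
    by (rule bdiag_one) (use Dc in auto)
  have "mat_rank (bdiag rs D * block_mat rs cs zb * bdiag cs E)
      = vec_space.rank (sum_list rs) (bdiag rs D * block_mat rs cs zb * bdiag cs E)"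
    unfolding mat_rank_def by simp
  also have "\<dots> = vec_space.rank (sum_list rs) (bdiag rs D * block_mat rs cs zb)"
    by (rule vec_space.rank_mult_right[OF DY bdiag_carrier bdiag_carrier EE])
  also have "\<dots> = vec_space.rank (sum_list rs) (block_mat rs cs zb)"
    by (rule vec_space.rank_mult_left[OF Yc bdiag_carrier bdiag_carrier DD])
  also have "\<dots> = mat_rank (block_mat rs cs zb)" unfolding mat_rank_def by simp
  finally show ?thesis unfolding Z Y .
qed

end
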